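(* Let $\sigma$ be a partial action of a locally compact Hausdorff group $G$ on a locally compact Hausdorff space $X$. Consider the conditions: (P1) for every pair of compact sets $L,M\subseteq X$, the set $((L,M)):=\{t\in G:\sigma_t(L\cap X_{t^{-1}})\cap M\neq\emptyset\}$ has compact closure; (P2) for every pair of compact sets $L,M\subseteq X$, the set $((L,M))$ is compact; (P3) the map $F_\sigma\colon\Gamma_\sigma\to X\times X$, $(t,x)\mapsto(\sigma_t(x),x)$, is proper. Then (P3)$\Rightarrow$(P2)$\Rightarrow$(P1), but none of the converse implications holds in general.
   Context: A topological partial action $\sigma=(\{X_t\}_{t\in G},\{\sigma_t\}_{t\in G})$ of $G$ on $X$: open sets $X_t\subseteq X$ and homeomorphisms $\sigma_t\colon X_{t^{-1}}\to X_t$ with $X_e=X$, $\sigma_e=\mathrm{id}$, $\sigma_s(X_{s^{-1}}\cap X_t)=X_s\cap X_{st}$, $\sigma_s\sigma_t=\sigma_{st}$ on $X_{t^{-1}}\cap X_{t^{-1}s^{-1}}$, such that $\Gamma_\sigma:=\{(t,x)\in G\times X:x\in X_{t^{-1}}\}$ is open in $G\times X$ and $(t,x)\mapsto\sigma_t(x)$ is continuous on $\Gamma_\sigma$. A map is proper if preimages of compact sets are compact. *)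

theory Defs
  imports "HOL-Analysis.Analysis" "HOL-Algebra.Group"
begin

definition topological_group :: "('g, 'm) monoid_scheme \<Rightarrow> 'g topology \<Rightarrow> bool" where
  "topological_group G TG \<longleftrightarrow>
     group G \<and> topspace TG = carrier G \<and>
     continuous_map (prod_topology TG TG) TG (\<lambda>(a, b). a \<otimes>\<^bsub>G\<^esub> b) \<and>
     continuous_map TG TG (\<lambda>a. inv\<^bsub>G\<^esub> a)"

definition lc_hausdorff :: "'a topology \<Rightarrow> bool" where
  "lc_hausdorff T \<longleftrightarrow> Hausdorff_space T \<and> locally_compact_space T"

definition pa_Gamma :: "('g, 'm) monoid_scheme \<Rightarrow> ('g \<Rightarrow> 'x set) \<Rightarrow> ('g \<times> 'x) set" where
  "pa_Gamma G D = {(t, x). t \<in> carrier G \<and> x \<in> D (inv\<^bsub>G\<^esub> t)}"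

text \<open>Topological partial action of G on X: D t is the open set X_t, s t is sigma_t.\<close>
definition topological_partial_action ::
  "('g, 'm) monoid_scheme \<Rightarrow> 'g topology \<Rightarrow> 'x topology \<Rightarrow> ('g \<Rightarrow> 'x set) \<Rightarrow> ('g \<Rightarrow> 'x \<Rightarrow> 'x) \<Rightarrow> bool" where
  "topological_partial_action G TG X D s \<longleftrightarrow>
     (\<forall>t\<in>carrier G. openin X (D t)) \<and>
     (\<forall>t\<in>carrier G. homeomorphic_map (subtopology X (D (inv\<^bsub>G\<^esub> t))) (subtopology X (D t)) (s t)) \<and>
     D \<one>\<^bsub>G\<^esub> = topspace X \<and>
     (\<forall>x\<in>topspace X. s \<one>\<^bsub>G\<^esub> x = x) \<and>
     (\<forall>a\<in>carrier G. \<forall>t\<in>carrier G.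
        s a ` (D (inv\<^bsub>G\<^esub> a) \<inter> D t) = D a \<inter> D (a \<otimes>\<^bsub>G\<^esub> t)) \<and>
     (\<forall>a\<in>carrier G. \<forall>t\<in>carrier G.
        \<forall>x \<in> D (inv\<^bsub>G\<^esub> t) \<inter> D (inv\<^bsub>G\<^esub> t \<otimes>\<^bsub>G\<^esub> inv\<^bsub>G\<^esub> a).
          s a (s t x) = s (a \<otimes>\<^bsub>G\<^esub> t) x) \<and>
     openin (prod_topology TG X) (pa_Gamma G D) \<and>
     continuous_map (subtopology (prod_topology TG X) (pa_Gamma G D)) X (\<lambda>(t, x). s t x)"

definition pa_LM :: "('g, 'm) monoid_scheme \<Rightarrow> ('g \<Rightarrow> 'x set) \<Rightarrow> ('g \<Rightarrow> 'x \<Rightarrow> 'x) \<Rightarrow> 'x set \<Rightarrow> 'x set \<Rightarrow> 'g set" where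
  "pa_LM G D s L M = {t \<in> carrier G. s t ` (L \<inter> D (inv\<^bsub>G\<^esub> t)) \<inter> M \<noteq> {}}"

definition proper_on :: "'a topology \<Rightarrow> 'b topology \<Rightarrow> ('a \<Rightarrow> 'b) \<Rightarrow> bool" where
  "proper_on A B f \<longleftrightarrow> (\<forall>K. compactin B K \<longrightarrow> compactin A {a \<in> topspace A. f a \<in> K})"

definition pa_P1 where
  "pa_P1 G TG X D s \<longleftrightarrow> (\<forall>L M. compactin X L \<and> compactin X M \<longrightarrow>
      compactin TG (TG closure_of (pa_LM G D s L M)))"

definition pa_P2 where
  "pa_P2 G TG X D s \<longleftrightarrow> (\<forall>L M. compactin X L \<and> compactin X M \<longrightarrow>
      compactin TG (pa_LM G D s L M))"

definition pa_P3 where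
  "pa_P3 G TG X D s \<longleftrightarrow>
     proper_on (subtopology (prod_topology TG X) (pa_Gamma G D)) (prod_topology X X)
       (\<lambda>(t, x). (s t x, x))"

end

theory Submission
  imports Defs
begin


lemma P3_imp_P2:
  assumes "pa_P3 G TG X D s" and tg: "topspace TG = carrier G"
  shows "pa_P2 G TG X D s"
  unfolding pa_P2_def
proof (intro allI impI)
  fix L M assume LM: "compactin X L \<and> compactin X M"
  let ?Gm = "subtopology (prod_topology TG X) (pa_Gamma G D)"
  let ?P = "{a \<in> topspace ?Gm. (\<lambda>(t, x). (s t x, x)) a \<in> M \<times> L}"
  have "compactin (prod_topology X X) (M \<times> L)"
    using LM by (simp add: compactin_Times)
  then have cP: "compactin ?Gm ?P"
    using assms unfolding pa_P3_def proper_on_def by blast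
  have cf: "continuous_map ?Gm TG fst"
    by (simp add: continuous_map_from_subtopology continuous_map_fst)
  have "compactin TG (fst ` ?P)"
    using image_compactin[OF cP cf] .
  moreover have "fst ` ?P = pa_LM G D s L M"
  proof -
    have Ls: "L \<subseteq> topspace X" using LM compactin_subset_topspace by blast
    show ?thesis
      unfolding pa_LM_def pa_Gamma_def
      using Ls tg
      by (auto simp: image_iff) (force+)
  qed
  ultimately show "compactin TG (pa_LM G D s L M)" by simp
qed

lemma P2_imp_P1:
  assumes "pa_P2 G TG X D s" "Hausdorff_space TG"
  shows "pa_P1 G TG X D s"
  using assms unfolding pa_P2_def pa_P1_def
  by (metis closure_of_eq compactin_imp_closedin)



definition RG :: "real monoid" where
  "RG = \<lparr>carrier = UNIV, mult = (+), one = 0\<rparr>"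

lemma RG_simps [simp]: "carrier RG = UNIV" "x \<otimes>\<^bsub>RG\<^esub> y = x + y" "\<one>\<^bsub>RG\<^esub> = 0"
  by (simp_all add: RG_def)

lemma RG_group: "group RG"
  by (rule groupI) (auto intro: exI[of _ "- x" for x])

lemma RG_inv [simp]: "inv\<^bsub>RG\<^esub> x = - x"
  by (rule group.inv_equality[OF RG_group]) auto

lemma RG_tg: "topological_group RG euclidean"
  unfolding topological_group_def
proof (intro conjI)
  show "continuous_map (prod_topology euclidean euclidean) euclidean (\<lambda>(a, b). a \<otimes>\<^bsub>RG\<^esub> b)"
    by (simp add: split_def continuous_intros)
  show "continuous_map euclidean euclidean (\<lambda>a. inv\<^bsub>RG\<^esub> a)"
    by (simp add: continuous_intros)
qed (auto simp: RG_group)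

lemma R_lc: "lc_hausdorff (euclidean :: real topology)"
  by (simp add: lc_hausdorff_def locally_compact_space_euclidean)

abbreviation S0 :: "(real \<times> real) set" where "S0 \<equiv> - {(0,0)}"

definition ZT :: "(real \<times> real) topology" where
  "ZT = subtopology euclidean S0"

definition D1 :: "real \<Rightarrow> (real \<times> real) set" where
  "D1 t = {p. snd p \<noteq> 0 \<or> 0 < fst p * (fst p - t)}"

definition s1 :: "real \<Rightarrow> real \<times> real \<Rightarrow> real \<times> real" where
  "s1 t p = (fst p + t, snd p)"

lemma D1_sub: "D1 t \<subseteq> S0"
  by (auto simp: D1_def)

lemma D1_open: "open (D1 t)"
proof -
  have "D1 t = {p. snd p \<noteq> 0} \<union> {p. 0 < fst p * (fst p - t)}"
    by (auto simp: D1_def)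
  moreover have "open {p::real\<times>real. snd p \<noteq> 0}"
    by (intro open_Collect_neq continuous_intros)
  moreover have "open {p::real\<times>real. 0 < fst p * (fst p - t)}"
    by (intro open_Collect_less continuous_intros)
  ultimately show ?thesis by auto
qed

lemma ZT_lc: "lc_hausdorff ZT"
  unfolding lc_hausdorff_def ZT_def
proof
  show "Hausdorff_space (subtopology euclidean S0)"
    by (simp add: Hausdorff_space_subtopology)
  show "locally_compact_space (subtopology euclidean S0)"
    by (rule locally_compact_space_open_subset) (auto simp: locally_compact_space_euclidean)
qed

lemma sub_ZT: "subtopology ZT (D1 t) = subtopology euclidean (D1 t)"
  unfolding ZT_def subtopology_subtopology using D1_sub by (simp add: Int_absorb1)

lemma s1_maps: "p \<in> D1 (- t) \<Longrightarrow> s1 t p \<in> D1 t"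
  by (auto simp: D1_def s1_def mult.commute)

lemma s1_inv [simp]: "s1 (- t) (s1 t p) = p" "s1 t (s1 (- t) p) = p"
  by (auto simp: s1_def)

lemma s1_cont: "continuous_on UNIV (s1 t)"
  unfolding s1_def by (intro continuous_intros)

lemma s1_homeo: "homeomorphic_map (subtopology euclidean (D1 (- t))) (subtopology euclidean (D1 t)) (s1 t)"
proof -
  have "homeomorphic_maps (subtopology euclidean (D1 (- t))) (subtopology euclidean (D1 t)) (s1 t) (s1 (- t))"
    unfolding homeomorphic_maps_def
    using s1_maps[of _ t] s1_maps[of _ "- t"] s1_cont[of t] s1_cont[of "- t"]
    by (auto simp: continuous_map_in_subtopology continuous_map_from_subtopology intro: continuous_on_subset)
  then show ?thesis using homeomorphic_map_maps by blast
qed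

lemma sign_lemma:
  fixes x a t :: real
  shows "0 < x * (x - a) \<Longrightarrow> 0 < x * (x - b) \<Longrightarrow> 0 < (x - a) * (x - b)"
  by (auto simp: zero_less_mult_iff)

lemma D1_image: "s1 a ` (D1 (- a) \<inter> D1 t) = D1 a \<inter> D1 (a + t)"
proof (intro equalityI subsetI)
  fix q assume "q \<in> s1 a ` (D1 (- a) \<inter> D1 t)"
  then obtain p where p: "p \<in> D1 (- a)" "p \<in> D1 t" "q = s1 a p" by auto
  then show "q \<in> D1 a \<inter> D1 (a + t)"
    by (auto simp: D1_def s1_def zero_less_mult_iff)
next
  fix q assume q: "q \<in> D1 a \<inter> D1 (a + t)"
  have "s1 (- a) q \<in> D1 (- a) \<inter> D1 t"
    using q by (auto simp: D1_def s1_def zero_less_mult_iff)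
  moreover have "q = s1 a (s1 (- a) q)" by simp
  ultimately show "q \<in> s1 a ` (D1 (- a) \<inter> D1 t)" by blast
qed

lemma prodZT: "prod_topology (euclidean::real topology) ZT = subtopology euclidean (UNIV \<times> S0)"
  unfolding ZT_def using subtopology_Times[of "euclidean::real topology" "euclidean::(real\<times>real) topology" UNIV S0]
  by simp

lemma Gamma1: "pa_Gamma RG D1 = {z. snd (snd z) \<noteq> 0} \<union> {z. 0 < fst (snd z) * (fst (snd z) + fst z)}"
  by (auto simp: pa_Gamma_def D1_def)

lemma Gamma1_open: "open (pa_Gamma RG D1)"
  unfolding Gamma1
  by (intro open_Un open_Collect_neq open_Collect_less continuous_intros)

lemma Gamma1_sub: "pa_Gamma RG D1 \<subseteq> UNIV \<times> S0"
  by (auto simp: pa_Gamma_def D1_def)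

lemma Z_cont: "continuous_map (subtopology (prod_topology euclidean ZT) (pa_Gamma RG D1)) ZT (\<lambda>(t, x). s1 t x)"
proof -
  have "continuous_map (subtopology euclidean (pa_Gamma RG D1)) (subtopology euclidean S0) (\<lambda>(t, x). s1 t x)"
  proof (rule continuous_map_into_subtopology)
    have "continuous_on UNIV (\<lambda>z::real \<times> real \<times> real. s1 (fst z) (snd z))"
      unfolding s1_def by (intro continuous_intros)
    then show "continuous_map (subtopology euclidean (pa_Gamma RG D1)) euclidean (\<lambda>(t, x). s1 t x)"
      by (intro continuous_map_from_subtopology) (simp add: split_def)
    show "(\<lambda>(t, x). s1 t x) \<in> topspace (subtopology euclidean (pa_Gamma RG D1)) \<rightarrow> S0"
      by (auto simp: pa_Gamma_def D1_def s1_def)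
  qed
  moreover have "subtopology (prod_topology euclidean ZT) (pa_Gamma RG D1) = subtopology euclidean (pa_Gamma RG D1)"
    unfolding prodZT subtopology_subtopology using Gamma1_sub by (simp add: Int_absorb1)
  ultimately show "continuous_map (subtopology (prod_topology euclidean ZT) (pa_Gamma RG D1)) ZT (\<lambda>(t, x). s1 t x)"
    by (simp add: ZT_def)
qed

lemma Z_tpa: "topological_partial_action RG euclidean ZT D1 s1"
  unfolding topological_partial_action_def
proof (intro conjI)
  show "\<forall>t\<in>carrier RG. openin ZT (D1 t)"
    unfolding ZT_def using D1_open D1_sub by (auto simp: openin_subtopology Int_absorb2)
  show "\<forall>t\<in>carrier RG. homeomorphic_map (subtopology ZT (D1 (inv\<^bsub>RG\<^esub> t))) (subtopology ZT (D1 t)) (s1 t)"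
    by (simp add: sub_ZT s1_homeo)
  show "D1 \<one>\<^bsub>RG\<^esub> = topspace ZT"
    by (auto simp: D1_def ZT_def)
  show "\<forall>x\<in>topspace ZT. s1 \<one>\<^bsub>RG\<^esub> x = x"
    by (simp add: s1_def)
  show "\<forall>a\<in>carrier RG. \<forall>t\<in>carrier RG. s1 a ` (D1 (inv\<^bsub>RG\<^esub> a) \<inter> D1 t) = D1 a \<inter> D1 (a \<otimes>\<^bsub>RG\<^esub> t)"
    by (simp add: D1_image)
  show "\<forall>a\<in>carrier RG. \<forall>t\<in>carrier RG.
        \<forall>x\<in>D1 (inv\<^bsub>RG\<^esub> t) \<inter> D1 (inv\<^bsub>RG\<^esub> t \<otimes>\<^bsub>RG\<^esub> inv\<^bsub>RG\<^esub> a). s1 a (s1 t x) = s1 (a \<otimes>\<^bsub>RG\<^esub> t) x"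
    by (simp add: s1_def)
  show "openin (prod_topology euclidean ZT) (pa_Gamma RG D1)"
    unfolding prodZT openin_subtopology
    using Gamma1_open Gamma1_sub by (auto intro!: exI[of _ "pa_Gamma RG D1"])
  show "continuous_map (subtopology (prod_topology euclidean ZT) (pa_Gamma RG D1)) ZT (\<lambda>(t, x). s1 t x)"
    by (rule Z_cont)
qed

lemma compactin_ZT: "compactin ZT L \<longleftrightarrow> compact L \<and> L \<subseteq> S0"
  by (simp add: ZT_def compactin_subtopology)

lemma LM_bound:
  assumes "t \<in> pa_LM RG D1 s1 L M"
  shows "\<exists>p\<in>L. \<exists>q\<in>M. t = fst q - fst p"
proof -
  obtain p where p: "p \<in> L" "s1 t p \<in> M" using assms by (auto simp: pa_LM_def)
  then show ?thesis by (intro bexI[OF _ p(1)] bexI[OF _ p(2)]) (simp add: s1_def)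
qed

lemma Z_P1: "pa_P1 RG euclidean ZT D1 s1"
  unfolding pa_P1_def
proof (intro allI impI)
  fix L M assume LM: "compactin ZT L \<and> compactin ZT M"
  then have "bounded L" "bounded M" by (auto simp: compactin_ZT compact_imp_bounded)
  then obtain B1 B2 where B1: "\<forall>p\<in>L. norm p \<le> B1" and B2: "\<forall>q\<in>M. norm q \<le> B2"
    unfolding bounded_iff by blast
  have "\<forall>t\<in>pa_LM RG D1 s1 L M. norm t \<le> B1 + B2"
  proof
    fix t assume "t \<in> pa_LM RG D1 s1 L M"
    then obtain p q where pq: "p \<in> L" "q \<in> M" "t = fst q - fst p" using LM_bound by blast
    have "norm (fst p) \<le> B1" using B1 pq(1) norm_fst_le[of "fst p" "snd p"] by auto
    moreover have "norm (fst q) \<le> B2" using B2 pq(2) norm_fst_le[of "fst q" "snd q"] by auto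
    ultimately show "norm t \<le> B1 + B2" using pq(3) by auto
  qed
  then have "bounded (pa_LM RG D1 s1 L M)" unfolding bounded_iff by blast
  then show "compactin euclidean (euclidean closure_of pa_LM RG D1 s1 L M)"
    by simp
qed

lemma not_compact_oc: "a < b \<Longrightarrow> \<not> compact {a<..(b::real)}"
proof
  assume ab: "a < b" and "compact {a<..b}"
  then obtain x where x: "x \<in> {a<..b}" "\<forall>y\<in>{a<..b}. x \<le> y"
    using compact_attains_inf[of "{a<..b}"] by auto
  have "(a + x)/2 \<in> {a<..b}" using x(1) by simp
  then have "x \<le> (a + x)/2" using x(2) by blast
  with x(1) show False by simp
qed

definition L1 :: "(real \<times> real) set" where "L1 = {-1} \<times> {-1/2..1/2}"
definition M1 :: "(real \<times> real) set" where "M1 = (\<lambda>y. (1 + y, y)) ` {-1/2..1/2}"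

lemma L1c: "compactin ZT L1"
  unfolding compactin_ZT L1_def by (auto intro: compact_Times)

lemma M1c: "compactin ZT M1"
  unfolding compactin_ZT M1_def
  by (auto intro!: compact_continuous_image continuous_intros)

lemma LM1: "pa_LM RG D1 s1 L1 M1 \<inter> {2..5/2} = {2<..5/2}"
proof (intro equalityI subsetI)
  fix t assume t: "t \<in> pa_LM RG D1 s1 L1 M1 \<inter> {2..5/2}"
  then obtain p where p: "p \<in> L1" "p \<in> D1 (- t)" "s1 t p \<in> M1"
    by (auto simp: pa_LM_def)
  then obtain y where y: "p = (-1, y)" by (auto simp: L1_def)
  from p(3) y have "t - 1 = 1 + y" by (auto simp: M1_def s1_def)
  moreover have "t \<noteq> 2"
  proof
    assume "t = 2"
    with \<open>t - 1 = 1 + y\<close> have "y = 0" by simp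
    with p(2) y \<open>t = 2\<close> show False by (simp add: D1_def)
  qed
  ultimately show "t \<in> {2<..5/2}" using t by auto
next
  fix t :: real assume t: "t \<in> {2<..5/2}"
  define y where "y = t - 2"
  have "(-1, y) \<in> L1" using t by (simp add: L1_def y_def)
  moreover have "(-1, y) \<in> D1 (- t)" using t by (simp add: D1_def y_def)
  moreover have "s1 t (-1, y) \<in> M1"
    unfolding M1_def s1_def using t by (auto simp: y_def intro!: image_eqI[of _ _ "t - 2"])
  ultimately have "t \<in> pa_LM RG D1 s1 L1 M1" by (auto simp: pa_LM_def)
  then show "t \<in> pa_LM RG D1 s1 L1 M1 \<inter> {2..5/2}" using t by simp
qed

lemma Z_notc: "\<not> compactin euclidean (pa_LM RG D1 s1 L1 M1)"
proof
  assume "compactin euclidean (pa_LM RG D1 s1 L1 M1)"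
  then have "compact (pa_LM RG D1 s1 L1 M1)" by simp
  then have "compact (pa_LM RG D1 s1 L1 M1 \<inter> {2..5/2})"
    by (intro compact_Int_closed) auto
  then show False unfolding LM1 using not_compact_oc[of 2 "5/2"] by simp
qed



definition Z2G :: "real monoid" where
  "Z2G = \<lparr>carrier = {0,1}, mult = (\<lambda>x y. if x = y then 0 else 1), one = 0\<rparr>"

lemma Z2G_simps [simp]: "carrier Z2G = {0,1}" "x \<otimes>\<^bsub>Z2G\<^esub> y = (if x = y then 0 else 1)"
  "\<one>\<^bsub>Z2G\<^esub> = 0"
  by (simp_all add: Z2G_def)

lemma Z2G_group: "group Z2G"
  by (rule groupI) (auto intro: exI[of _ 0] exI[of _ 1])

lemma Z2G_inv [simp]: "x \<in> {0,1} \<Longrightarrow> inv\<^bsub>Z2G\<^esub> x = x"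
  by (rule group.inv_equality[OF Z2G_group]) auto

definition D2 :: "real \<Rightarrow> real set" where
  "D2 t = (if t = 1 then -{0} else UNIV)"
definition s2 :: "real \<Rightarrow> real \<Rightarrow> real" where
  "s2 t x = x * (1 - 2 * t)"

lemma Z2_tg: "topological_group Z2G (discrete_topology {0,1})"
  unfolding topological_group_def
  using Z2G_group
  by (auto simp flip: prod_topology_discrete_topology)

lemma Z2_lc: "lc_hausdorff (discrete_topology {0::real,1})"
  by (simp add: lc_hausdorff_def locally_compact_space_discrete_topology)

lemma R_lc2: "lc_hausdorff (euclidean :: real topology)"
  by (simp add: lc_hausdorff_def locally_compact_space_euclidean)

lemma Gamma2: "pa_Gamma Z2G D2 = {0} \<times> UNIV \<union> {1} \<times> (-{0})"
  unfolding pa_Gamma_def D2_def by auto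

lemma neg_homeo: "homeomorphic_map (subtopology euclidean (-{0::real})) (subtopology euclidean (-{0})) uminus"
proof -
  have "homeomorphic_maps (subtopology euclidean (-{0::real})) (subtopology euclidean (-{0})) uminus uminus"
    unfolding homeomorphic_maps_def
    by (auto simp: continuous_map_in_subtopology continuous_map_from_subtopology continuous_map_minus)
  then show ?thesis using homeomorphic_map_maps by blast
qed

lemma Z2_tpa: "topological_partial_action Z2G (discrete_topology {0,1}) euclidean D2 s2"
  unfolding topological_partial_action_def
proof (intro conjI)
  show "\<forall>t\<in>carrier Z2G. openin euclidean (D2 t)"
    by (auto simp: D2_def)
  show "\<forall>t\<in>carrier Z2G. homeomorphic_map (subtopology euclidean (D2 (inv\<^bsub>Z2G\<^esub> t))) (subtopology euclidean (D2 t)) (s2 t)"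
  proof
    fix t assume "t \<in> carrier Z2G"
    then have "t = 0 \<or> t = 1" by auto
    then show "homeomorphic_map (subtopology euclidean (D2 (inv\<^bsub>Z2G\<^esub> t))) (subtopology euclidean (D2 t)) (s2 t)"
    proof
      assume t0: "t = 0"
      have "s2 0 = id" by (auto simp: s2_def fun_eq_iff)
      moreover have "D2 0 = UNIV" by (simp add: D2_def)
      moreover have "inv\<^bsub>Z2G\<^esub> 0 = 0" by (rule Z2G_inv) simp
      ultimately have "homeomorphic_map (subtopology euclidean (D2 (inv\<^bsub>Z2G\<^esub> 0))) (subtopology euclidean (D2 0)) (s2 0)"
        by (simp only: subtopology_UNIV homeomorphic_map_id)
      then show ?thesis using t0 by blast
    next
      assume "t = 1"
      moreover have "s2 1 = uminus" by (auto simp: s2_def)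
      ultimately show ?thesis using neg_homeo by (simp add: D2_def)
    qed
  qed
  show "D2 \<one>\<^bsub>Z2G\<^esub> = topspace euclidean" by (simp add: D2_def)
  show "\<forall>x\<in>topspace euclidean. s2 \<one>\<^bsub>Z2G\<^esub> x = x" by (simp add: s2_def)
  show "\<forall>a\<in>carrier Z2G. \<forall>t\<in>carrier Z2G.
        s2 a ` (D2 (inv\<^bsub>Z2G\<^esub> a) \<inter> D2 t) = D2 a \<inter> D2 (a \<otimes>\<^bsub>Z2G\<^esub> t)"
  proof (intro ballI)
    fix a t assume "a \<in> carrier Z2G" "t \<in> carrier Z2G"
    then have "(a = 0 \<or> a = 1) \<and> (t = 0 \<or> t = 1)" by auto
    moreover have "uminus ` (-{0::real}) = -{0}"
    proof
      show "uminus ` (-{0::real}) \<subseteq> -{0}" by auto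
      show "-{0} \<subseteq> uminus ` (-{0::real})"
      proof
        fix x :: real assume "x \<in> -{0}"
        then show "x \<in> uminus ` (-{0})" by (intro image_eqI[of x uminus "-x"]) auto
      qed
    qed
    ultimately show "s2 a ` (D2 (inv\<^bsub>Z2G\<^esub> a) \<inter> D2 t) = D2 a \<inter> D2 (a \<otimes>\<^bsub>Z2G\<^esub> t)"
      by (auto simp: D2_def s2_def)
  qed
  show "\<forall>a\<in>carrier Z2G. \<forall>t\<in>carrier Z2G.
        \<forall>x\<in>D2 (inv\<^bsub>Z2G\<^esub> t) \<inter> D2 (inv\<^bsub>Z2G\<^esub> t \<otimes>\<^bsub>Z2G\<^esub> inv\<^bsub>Z2G\<^esub> a).
          s2 a (s2 t x) = s2 (a \<otimes>\<^bsub>Z2G\<^esub> t) x"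
    by (auto simp: s2_def)
  show "openin (prod_topology (discrete_topology {0, 1}) euclidean) (pa_Gamma Z2G D2)"
    unfolding Gamma2
    by (intro openin_Un) (auto simp: openin_prod_Times_iff)
  have "continuous_map (prod_topology (discrete_topology {0::real, 1}) euclidean) euclidean (\<lambda>(t, x). s2 t x)"
  proof -
    have f: "continuous_map (prod_topology (discrete_topology {0::real, 1}) euclidean) euclidean fst"
    proof -
      have "continuous_map (discrete_topology {0::real, 1}) euclidean id" by simp
      from continuous_map_compose[OF continuous_map_fst this]
      show ?thesis by simp
    qed
    have "continuous_map (prod_topology (discrete_topology {0::real, 1}) euclidean) euclidean (\<lambda>p. snd p * (1 - 2 * fst p))"
      by (intro continuous_intros continuous_map_snd f)
    then show ?thesis by (simp add: s2_def split_def)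
  qed
  then show "continuous_map (subtopology (prod_topology (discrete_topology {0, 1}) euclidean) (pa_Gamma Z2G D2)) euclidean (\<lambda>(t, x). s2 t x)"
    by (rule continuous_map_from_subtopology)
qed

lemma Z2_P2: "pa_P2 Z2G (discrete_topology {0,1}) euclidean D2 s2"
  unfolding pa_P2_def pa_LM_def compactin_discrete_topology
  by (auto intro: finite_subset[of _ "{0,1}"])

lemma not_compact_oc01: "\<not> compact {0<..(1::real)}"
proof
  assume "compact {0<..(1::real)}"
  then obtain x where x: "x \<in> {0<..(1::real)}" "\<forall>y\<in>{0<..(1::real)}. x \<le> y"
    using compact_attains_inf[of "{0<..(1::real)}"] by auto
  have "x/2 \<in> {0<..(1::real)}" using x(1) by simp
  then have "x \<le> x/2" using x(2) by blast
  with x(1) show False by simp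
qed

lemma Z2_notP3: "\<not> pa_P3 Z2G (discrete_topology {0,1}) euclidean D2 s2"
proof
  let ?Gm = "subtopology (prod_topology (discrete_topology {0::real,1}) (euclidean::real topology)) (pa_Gamma Z2G D2)"
  let ?K = "{-1..1::real} \<times> {0..1::real}"
  let ?P = "{a \<in> topspace ?Gm. (\<lambda>(t, x). (s2 t x, x)) a \<in> ?K}"
  assume "pa_P3 Z2G (discrete_topology {0,1}) euclidean D2 s2"
  moreover have "compactin (prod_topology euclidean euclidean) ?K"
    using compactin_Times[of euclidean euclidean "{-1..1::real}" "{0..1::real}"] by simp
  ultimately have "compactin ?Gm ?P"
    unfolding pa_P3_def proper_on_def by blast
  then have c1: "compactin (prod_topology (discrete_topology {0::real,1}) euclidean) ?P"
    by (simp add: compactin_subtopology)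
  have cl: "closedin (prod_topology (discrete_topology {0::real,1}) (euclidean::real topology)) ({1} \<times> UNIV)"
    by (simp add: closedin_prod_Times_iff)
  have "compactin (prod_topology (discrete_topology {0::real,1}) euclidean) (({1} \<times> UNIV) \<inter> ?P)"
    by (rule closed_Int_compactin[OF cl c1])
  then have "compactin euclidean (snd ` (({1} \<times> UNIV) \<inter> ?P))"
    by (rule image_compactin) (rule continuous_map_snd)
  moreover have "snd ` (({1} \<times> UNIV) \<inter> ?P) = {0<..1}"
  proof (intro equalityI subsetI)
    fix y assume "y \<in> snd ` (({1} \<times> UNIV) \<inter> ?P)"
    then show "y \<in> {0<..1::real}" by (auto simp: Gamma2 s2_def)
  next
    fix y :: real assume y: "y \<in> {0<..1}"
    then have "(1, y) \<in> ({1} \<times> UNIV) \<inter> ?P" by (auto simp: Gamma2 s2_def)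
    then show "y \<in> snd ` (({1} \<times> UNIV) \<inter> ?P)" by force
  qed
  ultimately show False using not_compact_oc01 by simp
qed



lemma transport:
  fixes Z :: "'z topology" and X :: "'x topology"
  assumes hm: "homeomorphic_maps Z X j k"
    and grp: "group G"
    and tpa: "topological_partial_action G TG Z D s"
    and tg: "topspace TG = carrier G"
  shows "topological_partial_action G TG X (\<lambda>t. j ` D t) (\<lambda>t x. j (s t (k x)))"
    and "\<And>L M. compactin X L \<Longrightarrow> compactin X M \<Longrightarrow>
            pa_LM G (\<lambda>t. j ` D t) (\<lambda>t x. j (s t (k x))) L M = pa_LM G D s (k ` L) (k ` M)"
    and "X homeomorphic_space Z"
proof -
  have kj: "\<And>z. z \<in> topspace Z \<Longrightarrow> k (j z) = z" and jk: "\<And>x. x \<in> topspace X \<Longrightarrow> j (k x) = x"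
    using hm by (auto simp: homeomorphic_maps_def)
  have cj: "continuous_map Z X j" and ck: "continuous_map X Z k"
    using hm by (auto simp: homeomorphic_maps_def)
  have jZ: "\<And>z. z \<in> topspace Z \<Longrightarrow> j z \<in> topspace X" using cj by (auto simp: continuous_map_def)
  have kX: "\<And>x. x \<in> topspace X \<Longrightarrow> k x \<in> topspace Z" using ck by (auto simp: continuous_map_def)
  have hj: "homeomorphic_map Z X j" and hk: "homeomorphic_map X Z k"
    using hm homeomorphic_map_maps homeomorphic_maps_sym by blast+
  note T = tpa[unfolded topological_partial_action_def]
  have Dopen: "\<And>t. t \<in> carrier G \<Longrightarrow> openin Z (D t)" using T by blast
  have Dsub: "\<And>t. t \<in> carrier G \<Longrightarrow> D t \<subseteq> topspace Z" using Dopen openin_subset by blast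
  have shom: "\<And>t. t \<in> carrier G \<Longrightarrow> homeomorphic_map (subtopology Z (D (inv\<^bsub>G\<^esub> t))) (subtopology Z (D t)) (s t)"
    using T by blast
  have smaps: "\<And>t z. t \<in> carrier G \<Longrightarrow> z \<in> D (inv\<^bsub>G\<^esub> t) \<Longrightarrow> s t z \<in> D t"
  proof -
    fix t z assume t: "t \<in> carrier G" and z: "z \<in> D (inv\<^bsub>G\<^esub> t)"
    have "inv\<^bsub>G\<^esub> t \<in> carrier G" using grp t by (simp add: group.inv_closed)
    then have "z \<in> topspace (subtopology Z (D (inv\<^bsub>G\<^esub> t)))" using z Dsub by auto
    then show "s t z \<in> D t"
      using homeomorphic_imp_continuous_map[OF shom[OF t]] by (auto simp: continuous_map_def)
  qed
  have memj: "\<And>A z. A \<subseteq> topspace Z \<Longrightarrow> z \<in> topspace Z \<Longrightarrow> j z \<in> j ` A \<longleftrightarrow> z \<in> A"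
  proof -
    fix A z assume A: "A \<subseteq> topspace Z" and z: "z \<in> topspace Z"
    show "j z \<in> j ` A \<longleftrightarrow> z \<in> A"
    proof
      assume "j z \<in> j ` A"
      then obtain a where a: "a \<in> A" "j z = j a" by auto
      then have "k (j z) = k (j a)" by simp
      then have "z = a" using kj[OF z] kj a(1) A by auto
      then show "z \<in> A" using a by simp
    qed auto
  qed
  have inter: "\<And>A B. A \<subseteq> topspace Z \<Longrightarrow> B \<subseteq> topspace Z \<Longrightarrow> j ` A \<inter> j ` B = j ` (A \<inter> B)"
  proof -
    fix A B assume A: "A \<subseteq> topspace Z" and B: "B \<subseteq> topspace Z"
    show "j ` A \<inter> j ` B = j ` (A \<inter> B)"
    proof (intro equalityI subsetI)
      fix y assume "y \<in> j ` A \<inter> j ` B"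
      then obtain a where a: "a \<in> A" "y = j a" and "y \<in> j ` B" by auto
      then have "a \<in> B" using memj[OF B] A by auto
      then show "y \<in> j ` (A \<inter> B)" using a by auto
    qed auto
  qed
  define D' where "D' = (\<lambda>t. j ` D t)"
  define s' where "s' = (\<lambda>t x. j (s t (k x)))"
  have Gam: "pa_Gamma G D' = (\<lambda>(t, z). (t, j z)) ` pa_Gamma G D"
  proof (intro equalityI subsetI)
    fix a assume "a \<in> pa_Gamma G D'"
    then obtain t z where "a = (t, j z)" "t \<in> carrier G" "z \<in> D (inv\<^bsub>G\<^esub> t)"
      by (auto simp: pa_Gamma_def D'_def)
    then show "a \<in> (\<lambda>(t, z). (t, j z)) ` pa_Gamma G D"
      by (auto simp: pa_Gamma_def image_iff)
  next
    fix a assume "a \<in> (\<lambda>(t, z). (t, j z)) ` pa_Gamma G D"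
    then show "a \<in> pa_Gamma G D'" by (auto simp: pa_Gamma_def D'_def)
  qed
  have hprod: "homeomorphic_maps (prod_topology TG Z) (prod_topology TG X) (\<lambda>(t, z). (id t, j z)) (\<lambda>(t, x). (id t, k x))"
  proof -
    have hid: "homeomorphic_maps TG TG id id" by (simp add: homeomorphic_maps_id)
    show ?thesis unfolding homeomorphic_maps_prod using hm hid by blast
  qed
  then have hprod': "homeomorphic_map (prod_topology TG Z) (prod_topology TG X) (\<lambda>(t, z). (t, j z))"
    using homeomorphic_map_maps by fastforce
  show "topological_partial_action G TG X (\<lambda>t. j ` D t) (\<lambda>t x. j (s t (k x)))"
    unfolding D'_def[symmetric] s'_def[symmetric] topological_partial_action_def
  proof (intro conjI)
    show "\<forall>t\<in>carrier G. openin X (D' t)"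
      using Dopen homeomorphic_imp_open_map[OF hj] by (auto simp: open_map_def D'_def)
    show "\<forall>t\<in>carrier G. homeomorphic_map (subtopology X (D' (inv\<^bsub>G\<^esub> t))) (subtopology X (D' t)) (s' t)"
    proof
      fix t assume t: "t \<in> carrier G"
      have it: "inv\<^bsub>G\<^esub> t \<in> carrier G" using grp t by (simp add: group.inv_closed)
      have h1: "homeomorphic_map (subtopology X (D' (inv\<^bsub>G\<^esub> t))) (subtopology Z (D (inv\<^bsub>G\<^esub> t))) k"
      proof (rule homeomorphic_map_subtopologies[OF hk])
        show "k ` (topspace X \<inter> D' (inv\<^bsub>G\<^esub> t)) = topspace Z \<inter> D (inv\<^bsub>G\<^esub> t)"
          using Dsub[OF it] kj jZ by (force simp: D'_def image_iff)
      qed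
      have h3: "homeomorphic_map (subtopology Z (D t)) (subtopology X (D' t)) j"
      proof (rule homeomorphic_map_subtopologies[OF hj])
        show "j ` (topspace Z \<inter> D t) = topspace X \<inter> D' t"
          using Dsub[OF t] jZ by (auto simp: D'_def)
      qed
      have "homeomorphic_map (subtopology X (D' (inv\<^bsub>G\<^esub> t))) (subtopology X (D' t)) (j \<circ> (s t \<circ> k))"
        by (rule homeomorphic_map_compose[OF homeomorphic_map_compose[OF h1 shom[OF t]] h3])
      moreover have "j \<circ> (s t \<circ> k) = s' t" by (auto simp: s'_def)
      ultimately show "homeomorphic_map (subtopology X (D' (inv\<^bsub>G\<^esub> t))) (subtopology X (D' t)) (s' t)"
        by simp
    qed
    have one: "\<one>\<^bsub>G\<^esub> \<in> carrier G" using grp by (simp add: group.is_monoid monoid.one_closed)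
    have D1: "D \<one>\<^bsub>G\<^esub> = topspace Z" using T by blast
    show "D' \<one>\<^bsub>G\<^esub> = topspace X"
      unfolding D'_def D1 using hj homeomorphic_imp_surjective_map by blast
    show "\<forall>x\<in>topspace X. s' \<one>\<^bsub>G\<^esub> x = x"
      using T kX jk by (auto simp: s'_def)
    show "\<forall>a\<in>carrier G. \<forall>t\<in>carrier G. s' a ` (D' (inv\<^bsub>G\<^esub> a) \<inter> D' t) = D' a \<inter> D' (a \<otimes>\<^bsub>G\<^esub> t)"
    proof (intro ballI)
      fix a t assume a: "a \<in> carrier G" and t: "t \<in> carrier G"
      have ia: "inv\<^bsub>G\<^esub> a \<in> carrier G" and at: "a \<otimes>\<^bsub>G\<^esub> t \<in> carrier G" using grp a t by (auto simp: group.inv_closed group.is_monoid monoid.m_closed)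
      have "D' (inv\<^bsub>G\<^esub> a) \<inter> D' t = j ` (D (inv\<^bsub>G\<^esub> a) \<inter> D t)"
        unfolding D'_def by (rule inter[OF Dsub[OF ia] Dsub[OF t]])
      moreover have "s' a ` (j ` A) = j ` (s a ` A)" if "A \<subseteq> topspace Z" for A
        using that kj by (force simp: s'_def image_iff)
      ultimately have "s' a ` (D' (inv\<^bsub>G\<^esub> a) \<inter> D' t) = j ` (s a ` (D (inv\<^bsub>G\<^esub> a) \<inter> D t))"
        using Dsub[OF t] by blast
      also have "\<dots> = j ` (D a \<inter> D (a \<otimes>\<^bsub>G\<^esub> t))" using T a t by blast
      also have "\<dots> = D' a \<inter> D' (a \<otimes>\<^bsub>G\<^esub> t)"
        unfolding D'_def by (rule inter[OF Dsub[OF a] Dsub[OF at], symmetric])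
      finally show "s' a ` (D' (inv\<^bsub>G\<^esub> a) \<inter> D' t) = D' a \<inter> D' (a \<otimes>\<^bsub>G\<^esub> t)" .
    qed
    show "\<forall>a\<in>carrier G. \<forall>t\<in>carrier G.
        \<forall>x\<in>D' (inv\<^bsub>G\<^esub> t) \<inter> D' (inv\<^bsub>G\<^esub> t \<otimes>\<^bsub>G\<^esub> inv\<^bsub>G\<^esub> a). s' a (s' t x) = s' (a \<otimes>\<^bsub>G\<^esub> t) x"
    proof (intro ballI)
      fix a t x assume a: "a \<in> carrier G" and t: "t \<in> carrier G"
        and x: "x \<in> D' (inv\<^bsub>G\<^esub> t) \<inter> D' (inv\<^bsub>G\<^esub> t \<otimes>\<^bsub>G\<^esub> inv\<^bsub>G\<^esub> a)"
      have it: "inv\<^bsub>G\<^esub> t \<in> carrier G" and c2: "inv\<^bsub>G\<^esub> t \<otimes>\<^bsub>G\<^esub> inv\<^bsub>G\<^esub> a \<in> carrier G"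
        using grp a t by (auto simp: group.inv_closed group.is_monoid monoid.m_closed)
      obtain z where z: "z \<in> D (inv\<^bsub>G\<^esub> t)" "x = j z" using x by (auto simp: D'_def)
      have zZ: "z \<in> topspace Z" using z Dsub[OF it] by auto
      have z2: "z \<in> D (inv\<^bsub>G\<^esub> t \<otimes>\<^bsub>G\<^esub> inv\<^bsub>G\<^esub> a)"
        using x z zZ memj[OF Dsub[OF c2]] by (auto simp: D'_def)
      have stz: "s t z \<in> topspace Z" using smaps[OF t z(1)] Dsub[OF t] by auto
      have "s a (s t z) = s (a \<otimes>\<^bsub>G\<^esub> t) z" using T a t z(1) z2 by blast
      then show "s' a (s' t x) = s' (a \<otimes>\<^bsub>G\<^esub> t) x"
        using z(2) kj[OF zZ] kj[OF stz] by (simp add: s'_def)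
    qed
    have GamO: "openin (prod_topology TG Z) (pa_Gamma G D)" using T by blast
    show "openin (prod_topology TG X) (pa_Gamma G D')"
      unfolding Gam using homeomorphic_imp_open_map[OF hprod'] GamO by (auto simp: open_map_def)
    have sc: "continuous_map (subtopology (prod_topology TG Z) (pa_Gamma G D)) Z (\<lambda>(t, x). s t x)"
      using T by blast
    have c1: "continuous_map (subtopology (prod_topology TG X) (pa_Gamma G D'))
                (subtopology (prod_topology TG Z) (pa_Gamma G D)) (\<lambda>(t, x). (t, k x))"
    proof (rule continuous_map_into_subtopology)
      have "continuous_map (prod_topology TG X) (prod_topology TG Z) (\<lambda>(t, x). (id t, k x))"
        using hprod by (auto simp: homeomorphic_maps_def)
      then show "continuous_map (subtopology (prod_topology TG X) (pa_Gamma G D')) (prod_topology TG Z) (\<lambda>(t, x). (t, k x))"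
        by (intro continuous_map_from_subtopology) simp
      show "(\<lambda>(t, x). (t, k x)) \<in> topspace (subtopology (prod_topology TG X) (pa_Gamma G D')) \<rightarrow> pa_Gamma G D"
      proof
        fix a assume "a \<in> topspace (subtopology (prod_topology TG X) (pa_Gamma G D'))"
        then obtain t x where a: "a = (t, x)" "t \<in> carrier G" "x \<in> j ` D (inv\<^bsub>G\<^esub> t)"
          by (auto simp: pa_Gamma_def D'_def)
        have it: "inv\<^bsub>G\<^esub> t \<in> carrier G" using grp a(2) by (simp add: group.inv_closed)
        obtain z where "z \<in> D (inv\<^bsub>G\<^esub> t)" "x = j z" using a(3) by auto
        moreover then have "k x = z" using kj Dsub[OF it] by auto
        ultimately show "(\<lambda>(t, x). (t, k x)) a \<in> pa_Gamma G D"
          using a by (auto simp: pa_Gamma_def)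
      qed
    qed
    have "continuous_map (subtopology (prod_topology TG X) (pa_Gamma G D')) X (j \<circ> ((\<lambda>(t, x). s t x) \<circ> (\<lambda>(t, x). (t, k x))))"
      by (rule continuous_map_compose[OF continuous_map_compose[OF c1 sc] cj])
    moreover have "j \<circ> ((\<lambda>(t, x). s t x) \<circ> (\<lambda>(t, x). (t, k x))) = (\<lambda>(t, x). s' t x)"
      by (auto simp: s'_def fun_eq_iff)
    ultimately show "continuous_map (subtopology (prod_topology TG X) (pa_Gamma G D')) X (\<lambda>(t, x). s' t x)"
      by simp
  qed
  show "X homeomorphic_space Z"
    using hm homeomorphic_maps_sym homeomorphic_space_def by blast
  fix L M assume L: "compactin X L" and M: "compactin X M"
  have Ls: "L \<subseteq> topspace X" and Ms: "M \<subseteq> topspace X" using L M compactin_subset_topspace by auto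
  show "pa_LM G (\<lambda>t. j ` D t) (\<lambda>t x. j (s t (k x))) L M = pa_LM G D s (k ` L) (k ` M)"
  proof (intro equalityI subsetI)
    fix t assume "t \<in> pa_LM G (\<lambda>t. j ` D t) (\<lambda>t x. j (s t (k x))) L M"
    then obtain x where t: "t \<in> carrier G" and x: "x \<in> L" "x \<in> j ` D (inv\<^bsub>G\<^esub> t)" "j (s t (k x)) \<in> M"
      by (auto simp: pa_LM_def)
    have it: "inv\<^bsub>G\<^esub> t \<in> carrier G" using grp t by (simp add: group.inv_closed)
    obtain z where z: "z \<in> D (inv\<^bsub>G\<^esub> t)" "x = j z" using x(2) by auto
    have kx: "k x = z" using z kj Dsub[OF it] by auto
    have stz: "s t z \<in> topspace Z" using smaps[OF t z(1)] Dsub[OF t] by auto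
    have "s t z \<in> k ` M" using x(3) kx kj[OF stz] by (metis image_eqI)
    then show "t \<in> pa_LM G D s (k ` L) (k ` M)"
      using t x(1) z(1) kx by (auto simp: pa_LM_def)
  next
    fix t assume "t \<in> pa_LM G D s (k ` L) (k ` M)"
    then obtain x where t: "t \<in> carrier G" and x: "x \<in> L" "k x \<in> D (inv\<^bsub>G\<^esub> t)" "s t (k x) \<in> k ` M"
      by (auto simp: pa_LM_def)
    obtain m where m: "m \<in> M" "s t (k x) = k m" using x(3) by auto
    have "x \<in> j ` D (inv\<^bsub>G\<^esub> t)" using x(2) jk Ls x(1) by (metis image_eqI subsetD)
    moreover have "j (s t (k x)) \<in> M" using m jk Ms by auto
    ultimately show "t \<in> pa_LM G (\<lambda>t. j ` D t) (\<lambda>t x. j (s t (k x))) L M"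
      using t x(1) by (auto simp: pa_LM_def)
  qed
qed



definition enc :: "nat set \<Rightarrow> nat set \<Rightarrow> nat set" where
  "enc S T = (\<lambda>n. 2 * n) ` S \<union> (\<lambda>n. 2 * n + 1) ` T"

lemma enc_even: "2 * n \<in> enc S T \<longleftrightarrow> n \<in> S"
  unfolding enc_def by auto presburger

lemma enc_odd: "2 * n + 1 \<in> enc S T \<longleftrightarrow> n \<in> T"
  unfolding enc_def by auto presburger

lemma enc_inj: "enc S T = enc S' T' \<Longrightarrow> S = S' \<and> T = T'"
proof -
  assume e: "enc S T = enc S' T'"
  have "S = S'"
  proof (rule Set.set_eqI)
    fix n show "n \<in> S \<longleftrightarrow> n \<in> S'" using enc_even[of n S T] enc_even[of n S' T'] e by simp
  qed
  moreover have "T = T'"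
  proof (rule Set.set_eqI)
    fix n show "n \<in> T \<longleftrightarrow> n \<in> T'" using enc_odd[of n S T] enc_odd[of n S' T'] e by simp
  qed
  ultimately show ?thesis by simp
qed

lemma real_pair_inj: "\<exists>j0 :: real \<times> real \<Rightarrow> real. inj j0"
proof -
  obtain f :: "nat set \<Rightarrow> real" where f: "bij f"
    using nat_sets_eqpoll_reals unfolding eqpoll_def by blast
  define g where "g = inv_into UNIV f"
  have ginj: "inj g" unfolding g_def using f by (simp add: bij_imp_bij_inv bij_is_inj)
  have finj: "inj f" using f bij_is_inj by blast
  define j0 where "j0 = (\<lambda>(a, b). f (enc (g a) (g b)))"
  have "inj j0"
  proof (rule injI)
    fix x y assume "j0 x = j0 y"
    then have "enc (g (fst x)) (g (snd x)) = enc (g (fst y)) (g (snd y))"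
      using finj by (auto simp: j0_def split_def inj_eq)
    then have "g (fst x) = g (fst y)" "g (snd x) = g (snd y)" using enc_inj by blast+
    then show "x = y" using ginj by (simp add: inj_eq prod_eq_iff)
  qed
  then show ?thesis by blast
qed

lemma real_copy:
  fixes Z :: "(real \<times> real) topology"
  shows "\<exists>(X::real topology) j k. homeomorphic_maps Z X j k"
proof -
  obtain j0 :: "real \<times> real \<Rightarrow> real" where j0: "inj j0" using real_pair_inj by blast
  define k where "k = inv_into UNIV j0"
  have kj: "k (j0 z) = z" for z unfolding k_def using j0 by simp
  define X where "X = pullback_topology (j0 ` topspace Z) k Z"
  have tX: "topspace X = k -` topspace Z \<inter> j0 ` topspace Z"
    unfolding X_def topspace_pullback_topology ..
  have "continuous_map Z X j0"
    unfolding X_def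
  proof (rule continuous_map_pullback')
    have "k \<circ> j0 = id" using kj by (auto simp: fun_eq_iff)
    then show "continuous_map Z Z (k \<circ> j0)" by simp
    show "topspace Z \<subseteq> j0 -` (j0 ` topspace Z)" by auto
  qed
  moreover have "continuous_map X Z k"
  proof -
    have "continuous_map X Z (id \<circ> k)" unfolding X_def by (rule continuous_map_pullback) simp
    then show ?thesis by simp
  qed
  moreover have "\<forall>x\<in>topspace X. j0 (k x) = x" unfolding tX using kj by auto
  ultimately have "homeomorphic_maps Z X j0 k"
    unfolding homeomorphic_maps_def using kj by blast
  then show ?thesis by blast
qed


theorem proposition1p3:
  shows "(\<forall>(G :: ('g, 'm) monoid_scheme) (TG :: 'g topology) (X :: 'x topology) D s.
            topological_group G TG \<and> lc_hausdorff TG \<and> lc_hausdorff X \<and>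
            topological_partial_action G TG X D s \<longrightarrow>
            (pa_P3 G TG X D s \<longrightarrow> pa_P2 G TG X D s) \<and>
            (pa_P2 G TG X D s \<longrightarrow> pa_P1 G TG X D s)) \<and>
         (\<exists>(G :: real monoid) (TG :: real topology) (X :: real topology) D s.
            topological_group G TG \<and> lc_hausdorff TG \<and> lc_hausdorff X \<and>
            topological_partial_action G TG X D s \<and>
            pa_P1 G TG X D s \<and> \<not> pa_P2 G TG X D s) \<and>
         (\<exists>(G :: real monoid) (TG :: real topology) (X :: real topology) D s.
            topological_group G TG \<and> lc_hausdorff TG \<and> lc_hausdorff X \<and>
            topological_partial_action G TG X D s \<and>
            pa_P2 G TG X D s \<and> \<not> pa_P3 G TG X D s)"
proof (intro conjI)
  show "\<forall>(G :: ('g, 'm) monoid_scheme) (TG :: 'g topology) (X :: 'x topology) D s.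
            topological_group G TG \<and> lc_hausdorff TG \<and> lc_hausdorff X \<and>
            topological_partial_action G TG X D s \<longrightarrow>
            (pa_P3 G TG X D s \<longrightarrow> pa_P2 G TG X D s) \<and>
            (pa_P2 G TG X D s \<longrightarrow> pa_P1 G TG X D s)"
  proof (intro allI impI conjI)
    fix G :: "('g, 'm) monoid_scheme" and TG :: "'g topology" and X :: "'x topology" and D s
    assume H: "topological_group G TG \<and> lc_hausdorff TG \<and> lc_hausdorff X \<and> topological_partial_action G TG X D s"
    then have tg: "topspace TG = carrier G" and hd: "Hausdorff_space TG"
      by (auto simp: topological_group_def lc_hausdorff_def)
    show "pa_P3 G TG X D s \<Longrightarrow> pa_P2 G TG X D s" using P3_imp_P2 tg by blast
    show "pa_P2 G TG X D s \<Longrightarrow> pa_P1 G TG X D s" using P2_imp_P1 hd by blast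
  qed
  show "\<exists>(G :: real monoid) (TG :: real topology) (X :: real topology) D s.
            topological_group G TG \<and> lc_hausdorff TG \<and> lc_hausdorff X \<and>
            topological_partial_action G TG X D s \<and>
            pa_P1 G TG X D s \<and> \<not> pa_P2 G TG X D s"
  proof -
    obtain X :: "real topology" and j k where hm: "homeomorphic_maps ZT X j k"
      using real_copy[of ZT] by blast
    have tgRG: "topspace (euclidean::real topology) = carrier RG" by simp
    note tr = transport[OF hm RG_group Z_tpa tgRG]
    have cj: "continuous_map ZT X j" and ck: "continuous_map X ZT k"
      using hm by (auto simp: homeomorphic_maps_def)
    have lcX: "lc_hausdorff X"
      using tr(3) ZT_lc homeomorphic_Hausdorff_space homeomorphic_locally_compact_space
      by (auto simp: lc_hausdorff_def)
    have P1: "pa_P1 RG euclidean X (\<lambda>t. j ` D1 t) (\<lambda>t x. j (s1 t (k x)))"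
      unfolding pa_P1_def
    proof (intro allI impI)
      fix L M assume LM: "compactin X L \<and> compactin X M"
      then have "compactin ZT (k ` L)" "compactin ZT (k ` M)"
        using image_compactin ck by blast+
      then show "compactin euclidean (euclidean closure_of pa_LM RG (\<lambda>t. j ` D1 t) (\<lambda>t x. j (s1 t (k x))) L M)"
        using Z_P1 tr(2) LM unfolding pa_P1_def by simp
    qed
    have nP2: "\<not> pa_P2 RG euclidean X (\<lambda>t. j ` D1 t) (\<lambda>t x. j (s1 t (k x)))"
    proof
      assume P2: "pa_P2 RG euclidean X (\<lambda>t. j ` D1 t) (\<lambda>t x. j (s1 t (k x)))"
      have cL: "compactin X (j ` L1)" and cM: "compactin X (j ` M1)"
        using image_compactin cj L1c M1c by blast+
      have kj: "\<And>A. A \<subseteq> topspace ZT \<Longrightarrow> k ` (j ` A) = A"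
        using hm by (force simp: homeomorphic_maps_def image_iff)
      have "k ` (j ` L1) = L1" "k ` (j ` M1) = M1"
        using kj L1c M1c compactin_subset_topspace by blast+
      then have "compactin euclidean (pa_LM RG D1 s1 L1 M1)"
        using P2 cL cM tr(2)[OF cL cM] unfolding pa_P2_def by metis
      then show False using Z_notc by simp
    qed
    show ?thesis
      using RG_tg R_lc lcX tr(1) P1 nP2 by blast
  qed
  show "\<exists>(G :: real monoid) (TG :: real topology) (X :: real topology) D s.
            topological_group G TG \<and> lc_hausdorff TG \<and> lc_hausdorff X \<and>
            topological_partial_action G TG X D s \<and>
            pa_P2 G TG X D s \<and> \<not> pa_P3 G TG X D s"
    using Z2_tg Z2_lc R_lc Z2_tpa Z2_P2 Z2_notP3 by blast
qed

end
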